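(* Let $\alpha\in(0,1]$ and let $n$ be such that $n^\alpha=2^q$ for a positive integer $q$. Let $R\subset \mathrm{conv}(A_n)$ be an open axis-aligned rectangle of width $w(R)>1$, height $h(R)>1$ and area $w(R)h(R)\ge 4n^\alpha$. Then $B_n\cap R\neq\emptyset$.
   Context: Let $A_n=\{(i,j)\in\mathbb{Z}^2: 0\le i,j\le 14n\}$, so $\mathrm{conv}(A_n)=[0,14n]^2$. The sparse grid $B_n\subseteq A_n$ is the set of points of $A_n$ of at least one of the following forms: (1) $(i,j)$ with $n^\alpha \mid ij$; (2) $(i+k,j+k)$ with $n^\alpha\mid i$, $n^\alpha\mid j$, $k\in\{1,\dots,n^\alpha\}$ (forward diagonals); (3) $(i+k,j-k)$ with $n^\alpha\mid i$, $n^\alpha\mid j$, $k\in\{1,\dots,n^\alpha\}$ (backward diagonals). For an open rectangle $R=(x_1,x_2)\times(y_1,y_2)$, $w(R)=x_2-x_1$ and $h(R)=y_2-y_1$. *)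

theory Defs
  imports "HOL-Analysis.Analysis"
begin

definition grid_A :: "nat \<Rightarrow> (int \<times> int) set" where
  "grid_A n = {(i, j). 0 \<le> i \<and> i \<le> 14 * int n \<and> 0 \<le> j \<and> j \<le> 14 * int n}"

text \<open>The sparse grid B_n, where the parameter m stands for the integer n^alpha.\<close>
definition sparse_grid :: "nat \<Rightarrow> nat \<Rightarrow> (int \<times> int) set" where
  "sparse_grid n m = {p \<in> grid_A n.
      (\<exists>i j. p = (i, j) \<and> int m dvd i * j)
    \<or> (\<exists>i j k. (i, j) \<in> grid_A n \<and> int m dvd i \<and> int m dvd j \<and> 1 \<le> k \<and> k \<le> int m
               \<and> p = (i + k, j + k))
    \<or> (\<exists>i j k. (i, j) \<in> grid_A n \<and> int m dvd i \<and> int m dvd j \<and> 1 \<le> k \<and> k \<le> int m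
               \<and> p = (i + k, j - k))}"

definition open_rect :: "real \<Rightarrow> real \<Rightarrow> real \<Rightarrow> real \<Rightarrow> (real \<times> real) set" where
  "open_rect x1 x2 y1 y2 = {(x, y). x1 < x \<and> x < x2 \<and> y1 < y \<and> y < y2}"

end

theory Submission
  imports Defs
begin

lemma exists_pow2:
  fixes w :: real assumes "w > 1"
  shows "\<exists>a::nat. 2 ^ a < w \<and> w \<le> 2 ^ (a + 1)"
proof -
  obtain N :: nat where N: "w < 2 ^ N" using real_arch_pow[of 2 w] by auto
  let ?S = "{a::nat. 2 ^ a < w}"
  have fin: "finite ?S"
  proof (rule finite_subset[of _ "{..<N}"])
    show "?S \<subseteq> {..<N}"
    proof
      fix a assume "a \<in> ?S"
      hence "(2::real) ^ a < w" by simp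
      hence "(2::real) ^ a < 2 ^ N" using N by linarith
      hence "a < N" using power_strict_increasing_iff[of "2::real" a N] by simp
      thus "a \<in> {..<N}" by simp
    qed
  qed auto
  have ne: "0 \<in> ?S" using assms by simp
  define a where "a = Max ?S"
  have "a \<in> ?S" unfolding a_def using fin ne Max_in by blast
  moreover have "Suc a \<notin> ?S"
  proof
    assume "Suc a \<in> ?S"
    hence "Suc a \<le> a" unfolding a_def using fin Max_ge by blast
    thus False by simp
  qed
  ultimately show ?thesis by auto
qed

lemma exists_mult:
  fixes x1 x2 :: real and d :: nat
  assumes "d > 0" "x2 - x1 > d"
  shows "\<exists>k::int. x1 < real_of_int (k * int d) \<and> real_of_int (k * int d) < x2"
proof -
  define k where "k = \<lfloor>x1 / d\<rfloor> + 1"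
  have d: "real d > 0" using assms by simp
  have "x1 / d < k" unfolding k_def by linarith
  hence 1: "x1 < k * d" using d by (simp add: field_simps)
  have "k \<le> x1 / d + 1" unfolding k_def by linarith
  hence "k * d \<le> x1 + d" using d by (simp add: field_simps)
  hence 2: "k * d < x2" using assms by linarith
  show ?thesis using 1 2 by (intro exI[of _ k]) simp
qed

theorem lemma4:
  fixes \<alpha> :: real and n q :: nat and x1 x2 y1 y2 :: real
  assumes "0 < \<alpha>" and "\<alpha> \<le> 1"
    and "0 < q" and "real n powr \<alpha> = 2 ^ q"
    and "0 \<le> x1" and "x2 \<le> 14 * real n" and "0 \<le> y1" and "y2 \<le> 14 * real n"
    and "x2 - x1 > 1" and "y2 - y1 > 1"
    and "(x2 - x1) * (y2 - y1) \<ge> 4 * real n powr \<alpha>"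
  shows "\<exists>(i, j) \<in> sparse_grid n (2 ^ q). (real_of_int i, real_of_int j) \<in> open_rect x1 x2 y1 y2"
proof -
  obtain a :: nat where a: "2 ^ a < x2 - x1" "x2 - x1 \<le> 2 ^ (a + 1)"
    using exists_pow2 assms(9) by blast
  obtain b :: nat where b: "2 ^ b < y2 - y1" "y2 - y1 \<le> 2 ^ (b + 1)"
    using exists_pow2 assms(10) by blast
  obtain k1 :: int where k1: "x1 < real_of_int (k1 * int (2^a))" "real_of_int (k1 * int (2^a)) < x2"
  proof -
    have "real ((2::nat)^a) = 2^a" by simp
    hence "x2 - x1 > real ((2::nat)^a)" using a by simp
    thus ?thesis using exists_mult[of "2^a" x2 x1] that by auto
  qed
  obtain k2 :: int where k2: "y1 < real_of_int (k2 * int (2^b))" "real_of_int (k2 * int (2^b)) < y2"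
  proof -
    have "real ((2::nat)^b) = 2^b" by simp
    hence "y2 - y1 > real ((2::nat)^b)" using b by simp
    thus ?thesis using exists_mult[of "2^b" y2 y1] that by auto
  qed
  have "(2::real) ^ (q + 2) = 4 * real n powr \<alpha>" using assms(4) by (simp add: power_add)
  also have "\<dots> \<le> (x2 - x1) * (y2 - y1)" by fact
  also have "\<dots> \<le> 2 ^ (a + 1) * 2 ^ (b + 1)"
    using a b assms(9,10) by (intro mult_mono) auto
  also have "\<dots> = 2 ^ (a + b + 2)" by (simp add: power_add)
  finally have "q + 2 \<le> a + b + 2" by (simp add: power_increasing_iff)
  hence qab: "q \<le> a + b" by simp
  define i where "i = k1 * int (2^a)"
  define j where "j = k2 * int (2^b)"
  have "i * j = (k1 * k2) * 2 ^ (a + b)" unfolding i_def j_def by (simp add: power_add)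
  moreover have "(2::int) ^ q dvd 2 ^ (a + b)" using qab by (simp add: le_imp_power_dvd)
  ultimately have dv: "int (2 ^ q) dvd i * j" by simp
  have ri: "0 \<le> i" "i \<le> 14 * int n"
  proof -
    have "real_of_int i > 0" using k1 assms(5) unfolding i_def by linarith
    thus "0 \<le> i" by simp
    have "real_of_int i < 14 * real n" using k1 assms(6) unfolding i_def by linarith
    thus "i \<le> 14 * int n" by linarith
  qed
  have rj: "0 \<le> j" "j \<le> 14 * int n"
  proof -
    have "real_of_int j > 0" using k2 assms(7) unfolding j_def by linarith
    thus "0 \<le> j" by simp
    have "real_of_int j < 14 * real n" using k2 assms(8) unfolding j_def by linarith
    thus "j \<le> 14 * int n" by linarith
  qed
  have "(i, j) \<in> sparse_grid n (2 ^ q)"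
    unfolding sparse_grid_def grid_A_def using ri rj dv by auto
  moreover have "(real_of_int i, real_of_int j) \<in> open_rect x1 x2 y1 y2"
    unfolding open_rect_def i_def j_def using k1 k2 by auto
  ultimately show ?thesis by blast
qed

end
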